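(* Let $\Gamma\neq\mathbb N$ be the semigroup associated to an irreducible plane curve singularity, minimally generated by $r_0<\cdots<r_h$, with conductor $c$. Then $c\ge \frac53 2^{2h}-3\cdot 2^h+\frac43$.
   Context: A numerical semigroup is a submonoid of $(\mathbb N,+)$ with finite complement in $\mathbb N$; it has a unique minimal generating system. The conductor is $c=\mathrm F(\Gamma)+1$, where $\mathrm F(\Gamma)$ is the largest integer not in $\Gamma$. $\langle X\rangle$ is the submonoid generated by $X$. For an arrangement $(r_0,\ldots,r_h)$ of the minimal generators, set $d_k=\gcd(r_0,\ldots,r_{k-1})$ and $e_k=d_k/d_{k+1}$. A set $A$ of positive integers with nontrivial partition $A=A_1\cup A_2$ is the gluing of $A_1$ and $A_2$ if $\mathrm{lcm}(\gcd A_1,\gcd A_2)\in\langle A_1\rangle\cap\langle A_2\rangle$. $\Gamma$ is free for $(r_0,\ldots,r_h)$ if $h=0$, or $h\ge1$, $\{r_0,\ldots,r_h\}$ is the gluing of $\{r_0,\ldots,r_{h-1}\}$ and $\{r_h\}$, and $\langle r_0/d_h,\ldots,r_{h-1}/d_h\rangle$ is free for $(r_0/d_h,\ldots,r_{h-1}/d_h)$. $\Gamma$ is telescopic if it is free for the increasing arrangement $r_0<\cdots<r_h$. $\Gamma$ is the semigroup associated to an irreducible plane curve singularity if it is telescopic and $e_kr_k<r_{k+1}$ for all $k=1,\ldots,h-1$. *)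

theory Defs
  imports Complex_Main
begin

definition numerical_semigroup :: "nat set \<Rightarrow> bool" where
  "numerical_semigroup G \<longleftrightarrow> 0 \<in> G \<and> (\<forall>a\<in>G. \<forall>b\<in>G. a + b \<in> G) \<and> finite (UNIV - G)"

inductive_set monoid_gen :: "nat set \<Rightarrow> nat set" for X :: "nat set" where
  zero: "0 \<in> monoid_gen X"
| gen: "x \<in> X \<Longrightarrow> x \<in> monoid_gen X"
| add: "a \<in> monoid_gen X \<Longrightarrow> b \<in> monoid_gen X \<Longrightarrow> a + b \<in> monoid_gen X"

definition mingens :: "nat set \<Rightarrow> nat set" where
  "mingens G = {x \<in> G. x \<noteq> 0 \<and> \<not> (\<exists>a\<in>G. \<exists>b\<in>G. a \<noteq> 0 \<and> b \<noteq> 0 \<and> x = a + b)}"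

definition min_gen_arr :: "nat set \<Rightarrow> nat list \<Rightarrow> bool" where
  "min_gen_arr G rs \<longleftrightarrow> distinct rs \<and> set rs = mingens G"

definition conductor :: "nat set \<Rightarrow> nat" where
  "conductor G = Max (UNIV - G) + 1"

definition gluing :: "nat set \<Rightarrow> nat set \<Rightarrow> bool" where
  "gluing A1 A2 \<longleftrightarrow> A1 \<noteq> {} \<and> A2 \<noteq> {} \<and> A1 \<inter> A2 = {} \<and>
     lcm (Gcd A1) (Gcd A2) \<in> monoid_gen A1 \<inter> monoid_gen A2"

text \<open>Freeness, on the reversed arrangement (last generator first), so that
free_rev G [r_h, ..., r_0] means G is free for (r_0, ..., r_h).\<close>
function free_rev :: "nat set \<Rightarrow> nat list \<Rightarrow> bool" where
  "free_rev G [] = False"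
| "free_rev G [r] = min_gen_arr G [r]"
| "free_rev G (x # y # ys) =
     (let A1 = set (y # ys); d = Gcd A1; zs = map (\<lambda>a. a div d) (y # ys) in
      min_gen_arr G (rev (x # y # ys)) \<and> gluing A1 {x} \<and>
      free_rev (monoid_gen (set zs)) zs)"
  by pat_completeness auto
termination
  by (relation "measure (\<lambda>(G, xs). length xs)") auto

definition free_for :: "nat set \<Rightarrow> nat list \<Rightarrow> bool" where
  "free_for G rs \<longleftrightarrow> free_rev G (rev rs)"

definition telescopic :: "nat set \<Rightarrow> bool" where
  "telescopic G \<longleftrightarrow> numerical_semigroup G \<and> free_for G (sorted_list_of_set (mingens G))"

definition dseq :: "nat list \<Rightarrow> nat \<Rightarrow> nat" where
  "dseq rs k = Gcd (set (take k rs))"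

definition eseq :: "nat list \<Rightarrow> nat \<Rightarrow> nat" where
  "eseq rs k = dseq rs k div dseq rs (Suc k)"

definition plane_curve_semigroup :: "nat set \<Rightarrow> bool" where
  "plane_curve_semigroup G \<longleftrightarrow> telescopic G \<and>
     (let rs = sorted_list_of_set (mingens G); h = length rs - 1 in
      \<forall>k. 1 \<le> k \<and> k \<le> h - 1 \<longrightarrow> eseq rs k * rs ! k < rs ! (Suc k))"

end

theory Submission
  imports Defs
begin


lemma mg_sub: "A \<subseteq> G \<Longrightarrow> 0 \<in> G \<Longrightarrow> (\<forall>a\<in>G. \<forall>b\<in>G. a+b\<in>G) \<Longrightarrow> monoid_gen A \<subseteq> G"
proof
  fix z assume "A \<subseteq> G" "0 \<in> G" "\<forall>a\<in>G. \<forall>b\<in>G. a+b\<in>G" "z \<in> monoid_gen A"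
  from \<open>z \<in> monoid_gen A\<close> show "z \<in> G" using \<open>A \<subseteq> G\<close> \<open>0 \<in> G\<close> \<open>\<forall>a\<in>G. \<forall>b\<in>G. a+b\<in>G\<close>
    by (induction rule: monoid_gen.induct) auto
qed

lemma mg_closed: "\<forall>a\<in>monoid_gen A. \<forall>b\<in>monoid_gen A. a+b\<in>monoid_gen A"
  by (auto intro: monoid_gen.add)

lemma mg_mult: "a \<in> monoid_gen A \<Longrightarrow> m*a \<in> monoid_gen A"
  by (induction m) (auto intro: monoid_gen.add monoid_gen.zero)

lemma mg_dvd: "a \<in> monoid_gen A \<Longrightarrow> \<forall>x\<in>A. g dvd x \<Longrightarrow> g dvd a"
  by (induction rule: monoid_gen.induct) auto

lemma mg_split: "x \<in> monoid_gen A \<Longrightarrow> x \<notin> A \<Longrightarrow> x \<noteq> 0 \<Longrightarrow>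
   \<exists>a\<in>monoid_gen A. \<exists>b\<in>monoid_gen A. a\<noteq>0 \<and> b\<noteq>0 \<and> x = a+b"
proof (induction rule: monoid_gen.induct)
  case (add a b)
  show ?case
  proof (cases "a = 0")
    case True then show ?thesis using add by auto
  next
    case False
    show ?thesis
    proof (cases "b = 0")
      case True then show ?thesis using add by auto
    next
      case False then show ?thesis using add \<open>a \<noteq> 0\<close> by blast
    qed
  qed
qed auto

lemma mg_div: "a \<in> monoid_gen A \<Longrightarrow> \<forall>x\<in>A. d dvd x \<Longrightarrow> a div d \<in> monoid_gen ((\<lambda>x. x div d) ` A)"
proof (induction rule: monoid_gen.induct)
  case zero then show ?case by (simp add: monoid_gen.zero)
next
  case (gen x) then show ?case by (simp add: monoid_gen.gen)
next
  case (add a b)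
  have "d dvd a" using add mg_dvd by blast
  then have "(a+b) div d = a div d + b div d" by (simp add: div_plus_div_distrib_dvd_left)
  then show ?case using add by (simp add: monoid_gen.add)
qed

lemma mg_decomp: "g \<in> monoid_gen (insert x A) \<Longrightarrow> \<forall>a\<in>A. d dvd a \<Longrightarrow>
   \<exists>y\<in>monoid_gen ((\<lambda>a. a div d) ` A). \<exists>k. g = d*y + k*x"
proof (induction rule: monoid_gen.induct)
  case zero then show ?case by (intro bexI[of _ 0] exI[of _ 0]) (auto intro: monoid_gen.zero)
next
  case (gen z)
  show ?case
  proof (cases "z = x")
    case True then show ?thesis by (intro bexI[of _ 0] exI[of _ 1]) (auto intro: monoid_gen.zero)
  next
    case False
    then have "z \<in> A" using gen by auto
    then show ?thesis using gen by (intro bexI[of _ "z div d"] exI[of _ 0]) (auto intro: monoid_gen.gen)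
  qed
next
  case (add a b)
  then obtain y1 k1 y2 k2 where "y1 \<in> monoid_gen ((\<lambda>a. a div d) ` A)" "a = d*y1+k1*x"
    "y2 \<in> monoid_gen ((\<lambda>a. a div d) ` A)" "b = d*y2+k2*x" by blast
  then show ?case by (intro bexI[of _ "y1+y2"] exI[of _ "k1+k2"]) (auto intro: monoid_gen.add simp: algebra_simps)
qed

lemma in_mg_mingens: "0 \<in> G \<Longrightarrow> x \<in> G \<Longrightarrow> x \<in> monoid_gen (mingens G)"
proof (induction x rule: less_induct)
  case (less x)
  show ?case
  proof (cases "x \<in> mingens G \<or> x = 0")
    case True then show ?thesis by (auto intro: monoid_gen.gen monoid_gen.zero)
  next
    case False
    then obtain a b where "a \<in> G" "b \<in> G" "a \<noteq> 0" "b \<noteq> 0" "x = a + b"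
      using less.prems unfolding mingens_def by auto
    then show ?thesis using less by (auto intro: monoid_gen.add)
  qed
qed




definition closedG :: "nat set \<Rightarrow> bool" where
  "closedG G \<longleftrightarrow> 0 \<in> G \<and> (\<forall>a\<in>G. \<forall>b\<in>G. a+b\<in>G)"

lemma closedG_mg: "closedG (monoid_gen A)"
  unfolding closedG_def using mg_closed by (auto intro: monoid_gen.zero)

lemma free_rev_step:
  assumes "free_rev G (rev rs)" "length rs = Suc (Suc h')"
  obtains x B where "rs = B @ [x]" "length B = Suc h'" "min_gen_arr G rs" "gluing (set B) {x}"
    "free_rev (monoid_gen (set (map (\<lambda>a. a div Gcd (set B)) B))) (rev (map (\<lambda>a. a div Gcd (set B)) B))"
proof -
  obtain x y ys where r: "rev rs = x # y # ys"
    using assms(2) by (cases "rev rs" rule: remdups_adj.cases) (auto dest: arg_cong[of _ _ length])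
  define B where "B = rev (y # ys)"
  have rs: "rs = B @ [x]" using r unfolding B_def by (metis rev_rev_ident rev.simps(2))
  have fr: "free_rev G (x # y # ys)" using assms(1) r by simp
  define zs where "zs = map (\<lambda>a. a div Gcd (set (y # ys))) (y # ys)"
  have 1: "min_gen_arr G (rev (x # y # ys)) \<and> gluing (set (y # ys)) {x} \<and> free_rev (monoid_gen (set zs)) zs"
    using fr unfolding zs_def by (simp only: free_rev.simps Let_def)
  have "length B = Suc h'" using rs assms(2) by simp
  moreover have sB: "set B = set (y # ys)" unfolding B_def by simp
  moreover have "rev (map (\<lambda>a. a div Gcd (set B)) B) = zs"
    unfolding B_def zs_def by (simp add: rev_map)
  moreover have "map (\<lambda>a. a div Gcd (set B)) B = rev zs"
    unfolding B_def zs_def by (simp add: rev_map)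
  moreover have "rev (x # y # ys) = rs" using r by (metis rev_rev_ident)
  ultimately show ?thesis using that[OF rs] 1 by simp
qed

lemma nondvd_level:
  assumes "rs = B @ [x]" "min_gen_arr G rs" "gluing (set B) {x}" "closedG G"
  shows "\<not> Gcd (set B) dvd x"
proof
  assume "Gcd (set B) dvd x"
  then have "lcm (Gcd (set B)) (Gcd {x}) = x" by simp
  then have x1: "x \<in> monoid_gen (set B)" using assms(3) unfolding gluing_def by simp
  have "x \<notin> set B" using assms(1,2) unfolding min_gen_arr_def by auto
  moreover have xm: "x \<in> mingens G" using assms(1,2) unfolding min_gen_arr_def by auto
  moreover have "set B \<subseteq> G" using assms(1,2) unfolding min_gen_arr_def mingens_def by auto
  then have "monoid_gen (set B) \<subseteq> G" using assms(4) mg_sub unfolding closedG_def by blast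
  ultimately show False using mg_split[OF x1] unfolding mingens_def by blast
qed

lemma Gcd_scale:
  fixes B :: "nat list"
  assumes "\<forall>a\<in>set B. d dvd a"
  shows "Gcd (set (take k B)) = d * Gcd (set (take k (map (\<lambda>a. a div d) B)))"
proof -
  have "(*) d ` set (take k (map (\<lambda>a. a div d) B)) = (\<lambda>a. d * (a div d)) ` set (take k B)"
    by (simp add: take_map image_image)
  also have "\<dots> = id ` set (take k B)"
  proof (rule image_cong)
    fix z assume "z \<in> set (take k B)"
    then have "z \<in> set B" by (rule in_set_takeD)
    then have "d dvd z" using assms by blast
    then show "d * (z div d) = id z" by simp
  qed simp
  finally have "set (take k B) = (*) d ` set (take k (map (\<lambda>a. a div d) B))" by simp
  then show ?thesis by (simp add: Gcd_mult)
qed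




lemma level_basic:
  assumes "rs = B @ [x]" "min_gen_arr G rs" "length B = Suc h'"
  shows "Gcd (set B) \<noteq> 0" "\<forall>a\<in>set B. Gcd (set B) dvd a" "0 \<notin> set rs"
proof -
  show z: "0 \<notin> set rs" using assms(2) unfolding min_gen_arr_def mingens_def by auto
  show "\<forall>a\<in>set B. Gcd (set B) dvd a" by auto
  obtain b where "b \<in> set B" using assms(3) by (cases B) auto
  moreover have "0 \<notin> set B" using z assms(1) by auto
  ultimately have "b \<noteq> 0" by metis
  then show "Gcd (set B) \<noteq> 0" using \<open>b \<in> set B\<close> by auto
qed

lemma nondvd_all:
  "free_rev G (rev rs) \<Longrightarrow> length rs = Suc h \<Longrightarrow> closedG G \<Longrightarrow> 1 \<le> k \<Longrightarrow> k \<le> h \<Longrightarrow>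
   \<not> dseq rs k dvd rs ! k"
proof (induction h arbitrary: G rs k)
  case 0 then show ?case by simp
next
  case (Suc h')
  obtain x B where rs: "rs = B @ [x]" and lB: "length B = Suc h'" and mg: "min_gen_arr G rs"
    and gl: "gluing (set B) {x}"
    and fr: "free_rev (monoid_gen (set (map (\<lambda>a. a div Gcd (set B)) B))) (rev (map (\<lambda>a. a div Gcd (set B)) B))"
    using free_rev_step[OF Suc.prems(1,2)] by blast
  define d where "d = Gcd (set B)"
  define sub where "sub = map (\<lambda>a. a div d) B"
  have d0: "d \<noteq> 0" and dB: "\<forall>a\<in>set B. d dvd a" using level_basic[OF rs mg lB] unfolding d_def by auto
  show ?case
  proof (cases "k = Suc h'")
    case True
    then have "dseq rs k = d" "rs ! k = x" unfolding dseq_def d_def using rs lB by (auto simp: nth_append)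
    then show ?thesis using nondvd_level[OF rs mg gl Suc.prems(3)] unfolding d_def by simp
  next
    case False
    then have kh: "k \<le> h'" using Suc.prems by simp
    have IH: "\<not> dseq sub k dvd sub ! k"
      using Suc.IH[OF fr[folded d_def sub_def] _ closedG_mg Suc.prems(4) kh] lB unfolding sub_def by simp
    have "dseq rs k = Gcd (set (take k B))" unfolding dseq_def using rs lB kh by simp
    also have "\<dots> = d * dseq sub k" unfolding dseq_def sub_def using Gcd_scale[OF dB] by simp
    finally have e1: "dseq rs k = d * dseq sub k" .
    have "rs ! k = B ! k" using rs lB kh by (simp add: nth_append)
    also have "\<dots> = d * sub ! k" unfolding sub_def using lB kh dB by (simp add: dvd_mult_div_cancel)
    finally have e2: "rs ! k = d * sub ! k" .
    show ?thesis using IH d0 unfolding e1 e2 by simp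
  qed
qed




lemma sorted_div:
  fixes B :: "nat list"
  assumes "sorted_wrt (<) B" "\<forall>a\<in>set B. d dvd a" "d \<noteq> 0"
  shows "sorted_wrt (<) (map (\<lambda>a. a div d) B)"
  unfolding sorted_wrt_map
proof (rule sorted_wrt_mono_rel[OF _ assms(1)])
  fix a b assume "a \<in> set B" "b \<in> set B" "a < b"
  then obtain a' b' where "a = d * a'" "b = d * b'" using assms(2) by (metis dvdE)
  then show "a div d < b div d" using \<open>a < b\<close> assms(3) by simp
qed

lemma frob:
  "free_rev G (rev rs) \<Longrightarrow> length rs = Suc h \<Longrightarrow> closedG G \<Longrightarrow> sorted_wrt (<) rs \<Longrightarrow>
   Gcd (set rs) = 1 \<Longrightarrow> G \<subseteq> monoid_gen (set rs) \<Longrightarrow>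
   (\<forall>k. 1 \<le> k \<and> k < h \<longrightarrow> 2 * rs ! k < rs ! Suc k) \<Longrightarrow>
   \<exists>F::int. F \<notin> int ` G \<and> (h = 0 \<longrightarrow> F = -1) \<and>
     (1 \<le> h \<longrightarrow> 3 * F \<ge> 5 * 4^h - 9 * 2^h + 1 \<and> 6 * int (rs ! h) \<ge> 5 * 4^h - 2)"
proof (induction h arbitrary: G rs)
  case 0 then show ?case by (intro exI[of _ "-1"]) auto
next
  case (Suc h')
  obtain x B where rs: "rs = B @ [x]" and lB: "length B = Suc h'" and mg: "min_gen_arr G rs"
    and gl: "gluing (set B) {x}"
    and fr: "free_rev (monoid_gen (set (map (\<lambda>a. a div Gcd (set B)) B))) (rev (map (\<lambda>a. a div Gcd (set B)) B))"
    using free_rev_step[OF Suc.prems(1,2)] by blast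
  define d where "d = Gcd (set B)"
  define sub where "sub = map (\<lambda>a. a div d) B"
  define G' where "G' = monoid_gen (set sub)"
  have d0: "d \<noteq> 0" and dB: "\<forall>a\<in>set B. d dvd a" using level_basic[OF rs mg lB] unfolding d_def by auto
  have nd: "\<not> d dvd x" using nondvd_level[OF rs mg gl Suc.prems(3)] unfolding d_def .
  have d2: "d \<ge> 2" using d0 nd by (cases d) (auto, case_tac nat, auto)
  have cop: "gcd d x = 1" using Suc.prems(5) rs unfolding d_def by (simp add: gcd.commute)
  then have copr: "coprime d x" by (simp add: coprime_iff_gcd_eq_1)
  have "lcm d x = d * x" using lcm_coprime[OF copr] by simp
  then have "d * x \<in> monoid_gen (set B)" using gl unfolding gluing_def d_def by simp
  from mg_div[OF this dB] have xG': "x \<in> G'" using d0 unfolding G'_def sub_def by simp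
  have lsub: "length sub = Suc h'" unfolding sub_def using lB by simp
  have srt: "sorted_wrt (<) sub" unfolding sub_def
    using sorted_div[OF _ dB d0] Suc.prems(4) rs by (simp add: sorted_wrt_append)
  have "d = d * Gcd (set sub)" using Gcd_scale[OF dB, of "length B"] unfolding sub_def d_def by simp
  then have gsub: "Gcd (set sub) = 1" using d0 by simp
  have Bk: "B ! k = d * sub ! k" if "k < length B" for k
    unfolding sub_def using that dB by (simp add: dvd_mult_div_cancel)
  have rsk: "rs ! k = B ! k" if "k < length B" for k using that rs by (simp add: nth_append)
  have plane: "\<forall>k. 1 \<le> k \<and> k < h' \<longrightarrow> 2 * sub ! k < sub ! Suc k"
  proof (intro allI impI)
    fix k assume k: "1 \<le> k \<and> k < h'"
    then have "2 * rs ! k < rs ! Suc k" using Suc.prems(7) by simp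
    then have "2 * (d * sub ! k) < d * sub ! Suc k" using k lB Bk rsk by simp
    then show "2 * sub ! k < sub ! Suc k" by simp
  qed
  obtain F' where F'G: "F' \<notin> int ` G'" and F'0: "h' = 0 \<longrightarrow> F' = -1"
    and F'b: "1 \<le> h' \<longrightarrow> 3 * F' \<ge> 5 * 4^h' - 9 * 2^h' + 1 \<and> 6 * int (sub ! h') \<ge> 5 * 4^h' - 2"
  proof -
    have frs: "free_rev G' (rev sub)" using fr unfolding G'_def sub_def d_def .
    have cG: "closedG G'" unfolding G'_def by (rule closedG_mg)
    have "G' \<subseteq> monoid_gen (set sub)" unfolding G'_def by simp
    from Suc.IH[OF frs lsub cG srt gsub this plane] show ?thesis using that by blast
  qed
  define F where "F = int d * F' + (int d - 1) * int x"
  have notin: "F \<notin> int ` G"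
  proof
    assume "F \<in> int ` G"
    then obtain g where gG: "g \<in> G" and Fg: "F = int g" by auto
    have "g \<in> monoid_gen (insert x (set B))" using gG Suc.prems(6) rs by auto
    from mg_decomp[OF this dB] obtain y k where yG: "y \<in> G'" and gy: "g = d * y + k * x"
      unfolding G'_def sub_def by auto
    have eq: "int d * (F' + int x - int y) = int ((k+1) * x)"
      using Fg gy unfolding F_def by (simp add: algebra_simps)
    then have "int d dvd int ((k+1) * x)" by (metis dvd_triv_left)
    then have "d dvd (k+1) * x" by (simp only: of_nat_dvd_iff)
    then have "d dvd k + 1" using coprime_dvd_mult_left_iff[OF copr, of "k+1"] by presburger
    then obtain q where q: "k + 1 = d * q" by (auto elim: dvdE)
    then have q1: "q \<ge> 1" by (cases q) auto
    have "int ((k+1) * x) = int d * (int q * int x)" unfolding q by simp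
    then have "int d * (F' + int x - int y) = int d * (int q * int x)" using eq by simp
    then have "F' + int x - int y = int q * int x" using d0 by simp
    moreover obtain q' where "q = Suc q'" using q1 by (cases q) auto
    ultimately have "F' = int (y + (q - 1) * x)" by (simp add: algebra_simps)
    moreover have "y + (q - 1) * x \<in> G'" unfolding G'_def
      using yG mg_mult[OF xG'[unfolded G'_def]] unfolding G'_def by (auto intro: monoid_gen.add)
    ultimately have "F' \<in> int ` G'" by (metis image_eqI)
    then show False using F'G by blast
  qed
  have xr: "rs ! Suc h' = x" using rs lB by (simp add: nth_append)
    have main: "3 * F \<ge> 5 * 4 ^ Suc h' - 9 * 2 ^ Suc h' + 1 \<and> 6 * int (rs ! Suc h') \<ge> 5 * 4 ^ Suc h' - 2"
    proof (cases "h' = 0")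
      case True
      then have F': "F' = -1" using F'0 by simp
      obtain b where B: "B = [b]" using lB True by (cases B) auto
      have "d = b" unfolding d_def B by simp
      moreover have "b < x" using Suc.prems(4) rs B by simp
      ultimately have xd: "int x \<ge> int d + 1" by simp
      have "(int d - 1) * int x \<ge> (int d - 1) * (int d + 1)" using xd d2 by (intro mult_left_mono) auto
      moreover have "int d * int d \<ge> 2 * int d" using d2 by (intro mult_right_mono) auto
      ultimately have "int d * int x - int x \<ge> int d * int d - 1" "int d * int d \<ge> 2 * int d"
        by (auto simp: left_diff_distrib right_diff_distrib distrib_left distrib_right)
      moreover have "F = int d * int x - int d - int x" unfolding F_def F' by (simp add: algebra_simps)
      moreover have "int d \<ge> 2" using d2 by simp
      ultimately have "F \<ge> 1" by linarith
      then show ?thesis using True xr xd d2 by simp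
    next
      case False
      then have b1: "3 * F' \<ge> 5 * 4^h' - 9 * 2^h' + 1" and b2: "6 * int (sub ! h') \<ge> 5 * 4^h' - 2"
        using F'b by auto
      define P :: int where "P = 4^h'"
      define Q :: int where "Q = 2^h'"
      have PQ: "P = Q * Q" unfolding P_def Q_def by (simp add: power_mult_distrib[symmetric])
      have "(2::int)^1 \<le> 2^h'" by (rule power_increasing) (use False in auto)
      then have Q2: "Q \<ge> 2" unfolding Q_def by simp
      have "Q * Q \<ge> 2 * Q" using Q2 by (intro mult_right_mono) auto
      then have P2: "P \<ge> 2 * Q" using PQ by simp
      have "2 * rs ! h' < rs ! Suc h'" using Suc.prems(7) False by simp
      then have "2 * (d * sub ! h') < x" using Bk rsk lB xr by simp
      moreover have "2 * (2 * sub ! h') \<le> 2 * (d * sub ! h')" using d2 by simp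
      ultimately have xs: "int x \<ge> 4 * int (sub ! h') + 1" by linarith
      have F'0': "F' \<ge> 0" using b1 P2 Q2 unfolding P_def[symmetric] Q_def[symmetric] by linarith
      have "(int d - 2) * (F' + int x) \<ge> 0" using d2 F'0' by simp
      then have Fge: "F \<ge> 2 * F' + int x" unfolding F_def by (simp add: algebra_simps)
      have p4: "(4::int) ^ Suc h' = 4 * P" "(2::int) ^ Suc h' = 2 * Q" unfolding P_def Q_def by simp_all
      show ?thesis unfolding p4 xr using Fge xs b1 b2 unfolding P_def[symmetric] Q_def[symmetric] by linarith
    qed
  then show ?case using notin by auto
qed




lemma sorted_lset: "sorted_wrt (<) (r::nat list) \<Longrightarrow> sorted_list_of_set (set r) = r"
  by (simp add: strict_sorted_iff sorted_list_of_set_sort_remdups distinct_remdups_id sorted_sort_id)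

lemma all_in_G: "closedG G \<Longrightarrow> 1 \<in> G \<Longrightarrow> (n::nat) \<in> G"
  unfolding closedG_def by (induction n) (auto simp del: One_nat_def, metis Suc_eq_plus1)

theorem proposition5p2:
  fixes G :: "nat set" and r :: "nat list" and h :: nat
  assumes "plane_curve_semigroup G"
    and "G \<noteq> UNIV"
    and "sorted_wrt (<) r" and "set r = mingens G" and "length r = h + 1"
  shows "real (conductor G) \<ge> 5/3 * 2 ^ (2 * h) - 3 * 2 ^ h + 4/3"
proof -
  have rs: "sorted_list_of_set (mingens G) = r" using sorted_lset[OF assms(3)] assms(4) by simp
  have ns: "numerical_semigroup G" and fr: "free_rev G (rev r)"
    and pl: "\<forall>k. 1 \<le> k \<and> k \<le> h - 1 \<longrightarrow> eseq r k * r ! k < r ! Suc k"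
    using assms(1,5) unfolding plane_curve_semigroup_def telescopic_def free_for_def rs
    by (auto simp: Let_def)
  have cl: "closedG G" using ns unfolding numerical_semigroup_def closedG_def by auto
  have fin: "finite (UNIV - G)" using ns unfolding numerical_semigroup_def by auto
  have len: "length r = Suc h" using assms(5) by simp
  have Gsub: "G \<subseteq> monoid_gen (set r)"
    using in_mg_mingens cl assms(4) unfolding closedG_def by auto
  have z: "0 \<notin> set r" using assms(4) unfolding mingens_def by auto
  have g1: "Gcd (set r) = 1"
  proof -
    obtain m where m: "\<forall>n\<in>UNIV - G. n \<le> m" using fin finite_nat_set_iff_bounded_le by blast
    have "m + 1 \<in> G" "m + 2 \<in> G" using m by force+
    then have "Gcd (set r) dvd m + 1" "Gcd (set r) dvd m + 2"
      using Gsub mg_dvd[of _ "set r" "Gcd (set r)"] by auto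
    then have "Gcd (set r) dvd (m + 2) - (m + 1)" using dvd_diff_nat by blast
    then show ?thesis by simp
  qed
  have h1: "h \<ge> 1"
  proof (rule ccontr)
    assume "\<not> h \<ge> 1"
    then have "h = 0" by simp
    then obtain a where "r = [a]" using len by (cases r) auto
    then have "a = 1" using g1 by simp
    then have "1 \<in> G" using assms(4) \<open>r = [a]\<close> unfolding mingens_def by auto
    then have "G = UNIV" using all_in_G[OF cl] by auto
    then show False using assms(2) by simp
  qed
  have plane2: "\<forall>k. 1 \<le> k \<and> k < h \<longrightarrow> 2 * r ! k < r ! Suc k"
  proof (intro allI impI)
    fix k assume k: "1 \<le> k \<and> k < h"
    define a where "a = dseq r k"
    have nd: "\<not> a dvd r ! k" unfolding a_def using nondvd_all[OF fr len cl] k by simp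
    have "r ! 0 \<in> set (take k r)" using k len by (simp add: in_set_conv_nth) (metis k less_le_trans zero_less_one nth_take len Suc_less_eq less_SucI)
    moreover have "r ! 0 \<noteq> 0" using z len by (metis nth_mem zero_less_Suc)
    ultimately have a0: "a \<noteq> 0" unfolding a_def dseq_def by auto
    have "dseq r (Suc k) = gcd (r ! k) a" unfolding a_def dseq_def
      using k len by (simp add: take_Suc_conv_app_nth)
    then have e: "eseq r k = a div gcd (r ! k) a" unfolding eseq_def a_def by simp
    define b where "b = gcd (r ! k) a"
    have "b dvd a" unfolding b_def by simp
    then obtain c where c: "a = b * c" by (auto elim: dvdE)
    have "c \<noteq> 1"
    proof
      assume "c = 1"
      then have "a = gcd (r ! k) a" using c unfolding b_def by simp
      then have "a dvd r ! k" by (metis gcd_dvd1)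
      then show False using nd by simp
    qed
    moreover have "c \<noteq> 0" using a0 c by auto
    moreover have "b \<noteq> 0" using a0 c by auto
    ultimately have "eseq r k \<ge> 2" using e c unfolding b_def[symmetric] by simp
    then have "2 * r ! k \<le> eseq r k * r ! k" by simp
    also have "\<dots> < r ! Suc k"
    proof -
      have "1 \<le> k \<and> k \<le> h - 1" using k by linarith
      then show ?thesis using pl by blast
    qed
    finally show "2 * r ! k < r ! Suc k" .
  qed
  obtain F where FG: "F \<notin> int ` G" and Fb: "3 * F \<ge> 5 * 4^h - 9 * 2^h + 1"
    using frob[OF fr len cl assms(3) g1 Gsub plane2] h1 by auto
  define Q :: int where "Q = 2^h"
  have "(2::int)^1 \<le> 2^h" by (rule power_increasing) (use h1 in auto)
  then have Q2: "Q \<ge> 2" unfolding Q_def by simp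
  have P: "(4::int)^h = Q * Q" unfolding Q_def by (simp add: power_mult_distrib[symmetric])
  have "Q * Q \<ge> 2 * Q" using Q2 by (intro mult_right_mono) auto
  then have F1: "F \<ge> 1" using Fb Q2 unfolding P Q_def[symmetric] by linarith
  then have "nat F \<in> UNIV - G" using FG F1 by (auto simp: image_iff)
  then have "nat F \<le> Max (UNIV - G)" using fin by simp
  then have cF: "int (conductor G) \<ge> F + 1" unfolding conductor_def using F1 by simp
  have "real_of_int (5 * 4^h - 9 * 2^h + 1) \<le> real_of_int (3 * F)" using Fb by (simp only: of_int_le_iff)
  then have A: "5 * 4^h - 9 * 2^h + 1 \<le> 3 * real_of_int F" by simp
  have B: "real_of_int F + 1 \<le> real (conductor G)" using cF
    by (metis of_int_1 of_int_add of_int_le_iff of_int_of_nat_eq)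
  have "(2::real) ^ (2 * h) = 4 ^ h" by (simp add: power_mult)
  then show ?thesis using A B by simp
qed


end
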